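(* Let $m\ge1$, $N=2^m$, let $\mathcal{A}\subseteq[0,N-1]$ be nonempty and $\mathbf{P}\in\mathbb{F}_2^{N\times N}$ upper triangular with unit diagonal. Then $\mathcal{C}_{\mathbf{P}\boldsymbol{G}_N}(\mathcal{A})\subset\mathcal{C}_{\boldsymbol{G}_N}([\min(\mathcal{A}),N-1])$.
   Context: $[\ell,u]=\{\ell,\dots,u\}$. $\boldsymbol{G}_N=\begin{pmatrix}1&0\\1&1\end{pmatrix}^{\otimes m}$ over $\mathbb{F}_2$, rows/columns indexed by $0,\dots,N-1$; $\mathcal{C}_{\mathbf{B}}(\mathcal{S})$ is the code spanned by the rows of $\mathbf{B}$ indexed by $\mathcal{S}$. *)

theory Defs
  imports Main "HOL-Library.Z2"
begin

text \<open>Matrices over F_2 are functions nat => nat => bit (only indices < N matter);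
  vectors of length N are functions nat => bit, set to 0 outside [0, N-1].\<close>

definition kernel2 :: "nat \<Rightarrow> nat \<Rightarrow> bit" where
  "kernel2 a b = (if a = 0 \<and> b = 1 then 0 else 1)"

text \<open>m-fold Kronecker power of the kernel: G_{2^(m+1)} = kernel2 (x) G_{2^m}.\<close>
fun polarG :: "nat \<Rightarrow> nat \<Rightarrow> nat \<Rightarrow> bit" where
  "polarG 0 i j = 1"
| "polarG (Suc m) i j =
     kernel2 (i div 2 ^ m) (j div 2 ^ m) * polarG m (i mod 2 ^ m) (j mod 2 ^ m)"

definition mat_mult :: "nat \<Rightarrow> (nat \<Rightarrow> nat \<Rightarrow> bit) \<Rightarrow> (nat \<Rightarrow> nat \<Rightarrow> bit) \<Rightarrow> nat \<Rightarrow> nat \<Rightarrow> bit" where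
  "mat_mult N A B i j = (\<Sum>k<N. A i k * B k j)"

definition row_code :: "nat \<Rightarrow> (nat \<Rightarrow> nat \<Rightarrow> bit) \<Rightarrow> nat set \<Rightarrow> (nat \<Rightarrow> bit) set" where
  "row_code N B S = {v. \<exists>c :: nat \<Rightarrow> bit.
      v = (\<lambda>j. if j < N then (\<Sum>i\<in>S. c i * B i j) else 0)}"

end

theory Submission
  imports Defs
begin

theorem lemma1:
  fixes m N :: nat and A :: "nat set" and P :: "nat \<Rightarrow> nat \<Rightarrow> bit"
  assumes "m \<ge> 1"
    and "N = 2 ^ m"
    and "A \<subseteq> {0..N-1}"
    and "A \<noteq> {}"
    and "\<forall>i<N. \<forall>j<N. j < i \<longrightarrow> P i j = 0"
    and "\<forall>i<N. P i i = 1"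
  shows "row_code N (mat_mult N P (polarG m)) A \<subseteq> row_code N (polarG m) {Min A..N-1}"
proof
  have N1: "N \<ge> 1" using assms(2) by simp
  have finA: "finite A" using assms(3) finite_subset by blast
  have AN: "\<And>i. i \<in> A \<Longrightarrow> i < N" using assms(3) N1 by fastforce
  fix v assume "v \<in> row_code N (mat_mult N P (polarG m)) A"
  then obtain c where v: "v = (\<lambda>j. if j < N then (\<Sum>i\<in>A. c i * mat_mult N P (polarG m) i j) else 0)"
    unfolding row_code_def by blast
  define c' where "c' k = (\<Sum>i\<in>A. c i * P i k)" for k
  have c'0: "c' k = 0" if "k < Min A" for k
  proof -
    have "\<And>i. i \<in> A \<Longrightarrow> c i * P i k = 0"
    proof -
      fix i assume i: "i \<in> A"
      have "Min A \<le> i" using finA i by simp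
      then show "c i * P i k = 0" proof -
        have "k < i" using \<open>Min A \<le> i\<close> that by simp
        moreover have "k < N" using AN[OF i] \<open>k < i\<close> by simp
        ultimately have "P i k = 0" using assms(5) AN[OF i] by blast
        then show ?thesis by simp
      qed
    qed
    then show ?thesis unfolding c'_def by (intro sum.neutral) blast
  qed
  have "v = (\<lambda>j. if j < N then (\<Sum>k\<in>{Min A..N-1}. c' k * polarG m k j) else 0)"
  proof
    fix j
    show "v j = (if j < N then (\<Sum>k\<in>{Min A..N-1}. c' k * polarG m k j) else 0)"
    proof (cases "j < N")
      case True
      have "(\<Sum>i\<in>A. c i * mat_mult N P (polarG m) i j)
          = (\<Sum>i\<in>A. \<Sum>k<N. c i * P i k * polarG m k j)"
        unfolding mat_mult_def by (simp only: sum_distrib_left mult.assoc)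
      also have "\<dots> = (\<Sum>k<N. \<Sum>i\<in>A. c i * P i k * polarG m k j)"
        by (rule sum.swap)
      also have "\<dots> = (\<Sum>k<N. c' k * polarG m k j)"
        unfolding c'_def by (simp only: sum_distrib_right)
      also have "\<dots> = (\<Sum>k\<in>{Min A..N-1}. c' k * polarG m k j)"
      proof (rule sum.mono_neutral_right)
        show "finite {..<N}" by simp
        show "{Min A..N - 1} \<subseteq> {..<N}" using N1 by auto
        show "\<forall>i\<in>{..<N} - {Min A..N - 1}. c' i * polarG m i j = 0"
          using c'0 by auto
      qed
      finally show ?thesis using True v by simp
    qed (simp add: v)
  qed
  then show "v \<in> row_code N (polarG m) {Min A..N-1}"
    unfolding row_code_def by blast
qed

end
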